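(* There exists a constant $\eta>0$ such that for all lines $H_1,H_2\in\mathcal H$ (in general position) and every $R>0$, $$G(H_1,H_2):=\int_{\mathcal H}\mathbf 1\{c(H_1,H_2,H_3)\in B(0,R)\}\,\Lambda(\mathrm dH_3)\le \eta R.$$
   Context: $\mathcal H$ is the set of lines in $\mathbb{R}^2$, and $\Lambda$ is the translation- and rotation-invariant measure on $\mathcal H$ normalized so that the lines meeting the unit disk have measure $2$; equivalently $\int_{\mathcal H}f(H)\Lambda(\mathrm dH)=\int_{S^1}\int_0^\infty f(H(r,u))\,\mathrm dr\,\sigma(\mathrm du)$, where $H(r,u)$ is the line at distance $r$ from the origin with unit normal $u$, and $\sigma$ is the rotation-invariant measure on $S^1$ with $\sigma(S^1)=2$. For three lines in general position, $c(H_1,H_2,H_3)$ is the incenter of the unique triangle formed by them. $B(0,R)$ is the closed disk of radius $R$ centered at the origin. *)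

theory Defs
  imports "HOL-Analysis.Analysis"
begin

definition hline :: "real \<Rightarrow> real \<Rightarrow> (real \<times> real) set" where
  "hline r t = {x. fst x * cos t + snd x * sin t = r}"

definition is_line :: "(real \<times> real) set \<Rightarrow> bool" where
  "is_line H \<longleftrightarrow> (\<exists>r t. H = hline r t)"

definition gen_pos2 :: "(real \<times> real) set \<Rightarrow> (real \<times> real) set \<Rightarrow> bool" where
  "gen_pos2 H1 H2 \<longleftrightarrow> is_line H1 \<and> is_line H2 \<and> (\<exists>!p. p \<in> H1 \<and> p \<in> H2)"

definition gen_pos3 :: "(real \<times> real) set \<Rightarrow> (real \<times> real) set \<Rightarrow> (real \<times> real) set \<Rightarrow> bool" where
  "gen_pos3 H1 H2 H3 \<longleftrightarrow> gen_pos2 H1 H2 \<and> gen_pos2 H2 H3 \<and> gen_pos2 H1 H3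
      \<and> H1 \<inter> H2 \<inter> H3 = {}"

definition meet :: "(real \<times> real) set \<Rightarrow> (real \<times> real) set \<Rightarrow> real \<times> real" where
  "meet H1 H2 = (THE p. p \<in> H1 \<and> p \<in> H2)"

definition incenter :: "(real \<times> real) set \<Rightarrow> (real \<times> real) set \<Rightarrow> (real \<times> real) set \<Rightarrow> real \<times> real" where
  "incenter H1 H2 H3 = (THE c.
      c \<in> interior (convex hull {meet H2 H3, meet H1 H3, meet H1 H2})
      \<and> infdist c H1 = infdist c H2 \<and> infdist c H2 = infdist c H3)"

text \<open>Integral w.r.t. the motion-invariant line measure \<Lambda>:
  \<open>\<integral> f d\<Lambda> = \<integral>_{S^1} \<integral>_0^\<infinity> f(H(r,u)) dr \<sigma>(du)\<close> with \<sigma>(S^1) = 2,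
  i.e. \<sigma> = (arc length)/\<pi>, parametrising u = (cos t, sin t), t \<in> [0, 2\<pi>).\<close>
definition line_nn_integral :: "((real \<times> real) set \<Rightarrow> ennreal) \<Rightarrow> ennreal" where
  "line_nn_integral f =
     (\<integral>\<^sup>+ rt. f (hline (fst rt) (snd rt))
                * indicator ({0..} \<times> {0..<2*pi}) rt \<partial>(lborel \<Otimes>\<^sub>M lborel)) / ennreal pi"

text \<open>G(H1,H2) for radius R; triples not in general position (a \<Lambda>-null set of H3
  when H1,H2 are in general position) are not counted.\<close>
definition G :: "real \<Rightarrow> (real \<times> real) set \<Rightarrow> (real \<times> real) set \<Rightarrow> ennreal" where
  "G R H1 H2 = line_nn_integral (\<lambda>H3.
      indicator {H3. gen_pos3 H1 H2 H3 \<and> incenter H1 H2 H3 \<in> cball 0 R} H3)"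

end

theory Submission
  imports Defs
begin


definition lf :: "real \<Rightarrow> real \<Rightarrow> real \<times> real \<Rightarrow> real" where
  "lf r t x = fst x * cos t + snd x * sin t - r"

lemma l1: "(x1 - g * c) * c + (x2 - g * s) * s = x1 * c + x2 * s - g * (s^2 + c^2)" for c s :: real
  by (simp add: algebra_simps power2_eq_square)
lemma l2: "(a * c + b * s)^2 + (a * s - b * c)^2 = (a^2+b^2) * (s^2 + c^2)" for c s :: real
  by (simp add: algebra_simps power2_eq_square)

lemma cs_bound: "\<bar>a * cos t + b * sin t\<bar> \<le> sqrt (a^2 + b^2)"
proof -
  have "(a * cos t + b * sin t)^2 \<le> a^2 + b^2"
  proof -
    have "(a * cos t + b * sin t)^2 + (a * sin t - b * cos t)^2 = a^2+b^2"
      using l2[of a "cos t" b "sin t"] by simp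
    moreover have "(a * sin t - b * cos t)^2 \<ge> 0" by simp
    ultimately show ?thesis by linarith
  qed
  then show ?thesis by (metis real_sqrt_abs real_sqrt_le_mono)
qed

lemma infdist_hline: "infdist x (hline r t) = \<bar>lf r t x\<bar>"
proof -
  obtain x1 x2 where x: "x = (x1,x2)" by force
  define g where "g = lf r t x"
  define p where "p = (x1 - g * cos t, x2 - g * sin t)"
  have pin: "p \<in> hline r t"
  proof -
    have "(x1 - g * cos t) * cos t + (x2 - g * sin t) * sin t = x1 * cos t + x2 * sin t - g"
      using l1[of x1 g "cos t" x2 "sin t"] by simp
    also have "\<dots> = r" by (simp add: g_def lf_def x)
    finally show ?thesis by (simp add: hline_def p_def)
  qed
  have dp: "dist x p = \<bar>g\<bar>"
  proof -
    have "dist x p = sqrt ((g * cos t)^2 + (g * sin t)^2)"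
      by (simp add: x p_def dist_Pair_Pair dist_real_def)
    also have "\<dots> = sqrt (g^2)" by (simp add: power_mult_distrib flip: distrib_left)
    finally show ?thesis by simp
  qed
  have ne: "hline r t \<noteq> {}" using pin by auto
  have lb: "\<bar>g\<bar> \<le> dist x y" if "y \<in> hline r t" for y
  proof -
    obtain y1 y2 where y: "y = (y1,y2)" by force
    have "g = (x1 - y1) * cos t + (x2 - y2) * sin t"
      using that unfolding g_def lf_def hline_def x y by (simp add: algebra_simps)
    then have "\<bar>g\<bar> \<le> sqrt ((x1-y1)^2 + (x2-y2)^2)" using cs_bound by simp
    then show ?thesis by (simp add: x y dist_Pair_Pair dist_real_def)
  qed
  have "infdist x (hline r t) = (INF a\<in>hline r t. dist x a)" using ne by (simp add: infdist_def)
  also have "\<dots> = \<bar>g\<bar>"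
  proof (rule antisym)
    show "(INF a\<in>hline r t. dist x a) \<le> \<bar>g\<bar>"
      using pin dp by (metis cINF_lower bdd_belowI2 zero_le_dist)
    show "\<bar>g\<bar> \<le> (INF a\<in>hline r t. dist x a)" using ne lb by (intro cINF_greatest) auto
  qed
  finally show ?thesis by (simp add: g_def)
qed


lemma bary_unique:
  fixes k1 k2 k3 x y z :: real
  assumes "k1 > 0" "k2 > 0" "k3 > 0" "x + y + z = 1" "x * k1 = y * k2" "y * k2 = z * k3"
  shows "x = 1 / ((1/k1+1/k2+1/k3) * k1) \<and> y = 1 / ((1/k1+1/k2+1/k3) * k2) \<and> z = 1 / ((1/k1+1/k2+1/k3) * k3)"
proof -
  define d where "d = x * k1"
  have xd: "x = d / k1" "y = d / k2" "z = d / k3" using assms by (auto simp: d_def field_simps)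
  have "d * (1/k1+1/k2+1/k3) = 1" using assms(4) xd by (simp add: field_simps)
  moreover have "(1/k1+1/k2+1/k3) > 0" using assms(1-3) by (simp add: add_pos_pos)
  ultimately have "d = 1 / (1/k1+1/k2+1/k3)" by (simp add: eq_divide_eq)
  then show ?thesis using xd by simp
qed

lemma lf_aff3:
  assumes "u + v + w = 1"
  shows "lf r t (u *\<^sub>R A + v *\<^sub>R B + w *\<^sub>R C) = u * lf r t A + v * lf r t B + w * lf r t C"
proof -
  have "r = u * r + v * r + w * r" using assms by (metis distrib_right mult_1)
  then show ?thesis unfolding lf_def by (simp add: algebra_simps)
qed

lemma lf_aff2:
  "lf r t (u *\<^sub>R A + (1-u) *\<^sub>R C) = u * lf r t A + (1-u) * lf r t C"
  using lf_aff3[of u "1-u" 0 r t A C C] by simp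

lemma in_hline: "p \<in> hline r t \<longleftrightarrow> lf r t p = 0"
  by (simp add: hline_def lf_def)

lemma meet_in: assumes "gen_pos2 H H'" shows "meet H H' \<in> H" "meet H H' \<in> H'"
proof -
  have "\<exists>!p. p \<in> H \<and> p \<in> H'" using assms by (simp add: gen_pos2_def)
  from theI'[OF this] show "meet H H' \<in> H" "meet H H' \<in> H'" by (auto simp: meet_def)
qed


lemma incenter_prop:
  assumes gp: "gen_pos3 H1 H2 H3" and h: "H1 = hline a1 s1" "H2 = hline a2 s2" "H3 = hline a3 s3"
  shows "infdist (incenter H1 H2 H3) H1 = infdist (incenter H1 H2 H3) H3"
proof -
  define A where "A = meet H2 H3"
  define B where "B = meet H1 H3"
  define C where "C = meet H1 H2"
  define f1 where "f1 = lf a1 s1"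
  define f2 where "f2 = lf a2 s2"
  define f3 where "f3 = lf a3 s3"
  have g: "gen_pos2 H1 H2" "gen_pos2 H2 H3" "gen_pos2 H1 H3" and e: "H1 \<inter> H2 \<inter> H3 = {}"
    using gp by (auto simp: gen_pos3_def)
  have A: "A \<in> H2" "A \<in> H3" using meet_in[OF g(2)] by (auto simp: A_def)
  have B: "B \<in> H1" "B \<in> H3" using meet_in[OF g(3)] by (auto simp: B_def)
  have C: "C \<in> H1" "C \<in> H2" using meet_in[OF g(1)] by (auto simp: C_def)
  have A0: "f2 A = 0" "f3 A = 0" "f1 A \<noteq> 0" using A e h by (auto simp: f1_def f2_def f3_def in_hline)
  have B0: "f1 B = 0" "f3 B = 0" "f2 B \<noteq> 0" using B e h by (auto simp: f1_def f2_def f3_def in_hline)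
  have C0: "f1 C = 0" "f2 C = 0" "f3 C \<noteq> 0" using C e h by (auto simp: f1_def f2_def f3_def in_hline)
  have ncol: "\<not> collinear {A, B, C}"
  proof
    assume "collinear {A, B, C}"
    then have "A = C \<or> (\<exists>u. B = u *\<^sub>R A + (1 - u) *\<^sub>R C)" by (simp add: collinear_3_expand)
    then show False
    proof
      assume "A = C" then show False using A0 C0 by simp
    next
      assume "\<exists>u. B = u *\<^sub>R A + (1 - u) *\<^sub>R C"
      then obtain u where "B = u *\<^sub>R A + (1 - u) *\<^sub>R C" by blast
      then have "f2 B = u * f2 A + (1-u) * f2 C" by (simp add: f2_def lf_aff2)
      then show False using A0 B0 C0 by simp
    qed
  qed
  have int: "interior (convex hull {A,B,C}) =
      {v. \<exists>x y z. 0 < x \<and> 0 < y \<and> 0 < z \<and> x + y + z = 1 \<and> x *\<^sub>R A + y *\<^sub>R B + z *\<^sub>R C = v}"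
    using interior_convex_hull_3_minimal[OF ncol] by simp
  define k1 where "k1 = \<bar>f1 A\<bar>"
  define k2 where "k2 = \<bar>f2 B\<bar>"
  define k3 where "k3 = \<bar>f3 C\<bar>"
  have kp: "k1 > 0" "k2 > 0" "k3 > 0" using A0 B0 C0 by (auto simp: k1_def k2_def k3_def)
  define S where "S = 1/k1+1/k2+1/k3"
  have Sp: "S > 0" using kp by (simp add: S_def add_pos_pos)
  define c0 where "c0 = (1/(S*k1)) *\<^sub>R A + (1/(S*k2)) *\<^sub>R B + (1/(S*k3)) *\<^sub>R C"
  define P where "P = (\<lambda>c. c \<in> interior (convex hull {meet H2 H3, meet H1 H3, meet H1 H2})
      \<and> infdist c H1 = infdist c H2 \<and> infdist c H2 = infdist c H3)"
  have dist1: "infdist c H1 = \<bar>f1 c\<bar>" "infdist c H2 = \<bar>f2 c\<bar>" "infdist c H3 = \<bar>f3 c\<bar>" for c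
    using h by (simp_all add: infdist_hline f1_def f2_def f3_def)
  have fx: "f1 (x *\<^sub>R A + y *\<^sub>R B + z *\<^sub>R C) = x * f1 A"
       "f2 (x *\<^sub>R A + y *\<^sub>R B + z *\<^sub>R C) = y * f2 B"
       "f3 (x *\<^sub>R A + y *\<^sub>R B + z *\<^sub>R C) = z * f3 C" if "x + y + z = 1" for x y z
    using that A0 B0 C0 by (simp_all add: f1_def f2_def f3_def lf_aff3)
  have Pdef: "P c \<longleftrightarrow> c \<in> interior (convex hull {A,B,C}) \<and> \<bar>f1 c\<bar> = \<bar>f2 c\<bar> \<and> \<bar>f2 c\<bar> = \<bar>f3 c\<bar>" for c
    unfolding P_def A_def B_def C_def dist1 by (rule refl)
  have uniq: "c = c0" if Pc: "P c" for c
  proof -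
    have "c \<in> interior (convex hull {A,B,C})" using Pc Pdef by blast
    then obtain x y z where xyz: "0 < x" "0 < y" "0 < z" "x + y + z = 1" "x *\<^sub>R A + y *\<^sub>R B + z *\<^sub>R C = c"
      unfolding int mem_Collect_eq by blast
    have e: "\<bar>f1 c\<bar> = \<bar>f2 c\<bar>" "\<bar>f2 c\<bar> = \<bar>f3 c\<bar>" using Pc Pdef by blast+
    have "f1 c = x * f1 A" "f2 c = y * f2 B" "f3 c = z * f3 C" using fx[OF xyz(4)] xyz(5) by auto
    then have "\<bar>f1 c\<bar> = x * k1" "\<bar>f2 c\<bar> = y * k2" "\<bar>f3 c\<bar> = z * k3"
      using xyz(1-3) by (simp_all add: k1_def k2_def k3_def abs_mult)
    then have "x * k1 = y * k2" "y * k2 = z * k3" using e by simp_all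
    from bary_unique[OF kp xyz(4) this] have hx: "x = 1/(S*k1)" "y = 1/(S*k2)" "z = 1/(S*k3)"
      unfolding S_def by auto
    show ?thesis using xyz(5) unfolding c0_def hx by simp
  qed
  have ex: "P c0"
  proof -
    have pos: "0 < 1/(S*k1)" "0 < 1/(S*k2)" "0 < 1/(S*k3)" using kp Sp by auto
    have "1/(S*k1) + 1/(S*k2) + 1/(S*k3) = (1/k1+1/k2+1/k3)/S"
      by (simp add: add_divide_distrib mult.commute)
    then have sum: "1/(S*k1) + 1/(S*k2) + 1/(S*k3) = 1" using Sp by (simp add: S_def)
    have "\<exists>x y z. 0 < x \<and> 0 < y \<and> 0 < z \<and> x + y + z = 1 \<and> x *\<^sub>R A + y *\<^sub>R B + z *\<^sub>R C = c0"
      using pos sum unfolding c0_def by blast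
    then have i: "c0 \<in> interior (convex hull {A,B,C})" unfolding int by simp
    have "f1 c0 = 1/(S*k1) * f1 A" "f2 c0 = 1/(S*k2) * f2 B" "f3 c0 = 1/(S*k3) * f3 C"
      using fx[OF sum] unfolding c0_def by auto
    then have "\<bar>f1 c0\<bar> = 1/(S*k1) * k1" "\<bar>f2 c0\<bar> = 1/(S*k2) * k2" "\<bar>f3 c0\<bar> = 1/(S*k3) * k3"
      using pos Sp by (simp_all add: k1_def k2_def k3_def abs_mult)
    moreover have "1/(S*k1) * k1 = 1/S" "1/(S*k2) * k2 = 1/S" "1/(S*k3) * k3 = 1/S" using kp by auto
    ultimately show ?thesis using i Pdef by simp
  qed
  have "\<exists>!c. P c" using ex uniq by blast
  from theI'[OF this] have "P (THE c. P c)" .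
  moreover have "incenter H1 H2 H3 = (THE c. P c)" by (simp add: incenter_def P_def)
  ultimately have "P (incenter H1 H2 H3)" by simp
  then show ?thesis by (simp add: P_def)
qed



lemma lf_bound: "norm c \<le> R \<Longrightarrow> \<bar>fst c * cos t + snd c * sin t\<bar> \<le> R"
proof -
  assume "norm c \<le> R"
  moreover have "norm c = sqrt ((fst c)^2 + (snd c)^2)"
    by (cases c) (simp add: norm_Pair)
  ultimately show ?thesis using cs_bound[of "fst c" t "snd c"] by linarith
qed

lemma pointwise:
  assumes h1: "H1 = hline a1 s1" and gp: "gen_pos3 H1 H2 (hline r t)"
    and c: "incenter H1 H2 (hline r t) \<in> cball 0 R"
  shows "\<bar>r - a1\<bar> \<le> 2 * R \<or> \<bar>r + a1\<bar> \<le> 2 * R"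
proof -
  have "is_line H2" using gp by (simp add: gen_pos3_def gen_pos2_def)
  then obtain a2 s2 where h2: "H2 = hline a2 s2" by (auto simp: is_line_def)
  define x where "x = incenter H1 H2 (hline r t)"
  have "infdist x H1 = infdist x (hline r t)"
    unfolding x_def by (rule incenter_prop[OF gp h1 h2 refl])
  then have e: "\<bar>lf a1 s1 x\<bar> = \<bar>lf r t x\<bar>" by (simp add: h1 infdist_hline)
  have nx: "norm x \<le> R" using c by (simp add: x_def)
  have b1: "\<bar>fst x * cos t + snd x * sin t\<bar> \<le> R" using lf_bound[OF nx] .
  have b2: "\<bar>fst x * cos s1 + snd x * sin s1\<bar> \<le> R" using lf_bound[OF nx] .
  show ?thesis using e b1 b2 unfolding lf_def by (auto simp: abs_if split: if_splits)
qed

theorem lemma3p3: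
  shows "\<exists>\<eta>::real. \<eta> > 0 \<and>
    (\<forall>H1 H2 R. gen_pos2 H1 H2 \<longrightarrow> R > 0 \<longrightarrow> G R H1 H2 \<le> ennreal (\<eta> * R))"
proof (intro exI[of _ 16] conjI allI impI)
  fix H1 H2 :: "(real \<times> real) set" and R :: real
  assume g: "gen_pos2 H1 H2" and R: "R > 0"
  then obtain a1 s1 where h1: "H1 = hline a1 s1" by (auto simp: gen_pos2_def is_line_def)
  define J where "J = {0..<2*pi}"
  define I1 where "I1 = {a1 - 2*R .. a1 + 2*R}"
  define I2 where "I2 = {-a1 - 2*R .. -a1 + 2*R}"
  let ?S = "{H3. gen_pos3 H1 H2 H3 \<and> incenter H1 H2 H3 \<in> cball 0 R}"
  have pw: "indicator ?S (hline (fst rt) (snd rt)) * indicator ({0..} \<times> {0..<2*pi}) rt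
      \<le> indicator (I1 \<times> J) rt + (indicator (I2 \<times> J) rt :: ennreal)" for rt
  proof (cases "hline (fst rt) (snd rt) \<in> ?S \<and> rt \<in> {0..} \<times> {0..<2*pi}")
    case True
    obtain r t where rt: "rt = (r,t)" by force
    have "\<bar>r - a1\<bar> \<le> 2 * R \<or> \<bar>r + a1\<bar> \<le> 2 * R"
      using True pointwise[OF h1, of H2 r t R] by (simp add: rt)
    then have "rt \<in> I1 \<times> J \<or> rt \<in> I2 \<times> J" using True by (auto simp: rt I1_def I2_def J_def abs_le_iff)
    then show ?thesis using True by (auto simp: indicator_def)
  next
    case False
    then show ?thesis by (auto simp: indicator_def)
  qed
  have m1: "I1 \<times> J \<in> sets (lborel \<Otimes>\<^sub>M lborel)" "I2 \<times> J \<in> sets (lborel \<Otimes>\<^sub>M lborel)"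
    by (auto simp: I1_def I2_def J_def)
  have "(\<integral>\<^sup>+ rt. indicator ?S (hline (fst rt) (snd rt)) * indicator ({0..} \<times> {0..<2*pi}) rt
            \<partial>(lborel \<Otimes>\<^sub>M lborel))
      \<le> (\<integral>\<^sup>+ rt. indicator (I1 \<times> J) rt + indicator (I2 \<times> J) rt \<partial>(lborel \<Otimes>\<^sub>M lborel))"
    by (rule nn_integral_mono) (rule pw)
  also have "\<dots> = emeasure (lborel \<Otimes>\<^sub>M lborel) (I1 \<times> J) + emeasure (lborel \<Otimes>\<^sub>M lborel) (I2 \<times> J)"
    using m1 by (simp add: nn_integral_add)
  also have "\<dots> = ennreal (4*R) * ennreal (2*pi) + ennreal (4*R) * ennreal (2*pi)"
    using R by (simp add: lborel.emeasure_pair_measure_Times I1_def I2_def J_def)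
  also have "\<dots> = ennreal (16 * R * pi)"
    using R by (simp flip: ennreal_mult'' ennreal_plus)
  finally have le: "(\<integral>\<^sup>+ rt. indicator ?S (hline (fst rt) (snd rt)) * indicator ({0..} \<times> {0..<2*pi}) rt
            \<partial>(lborel \<Otimes>\<^sub>M lborel)) \<le> ennreal (16 * R * pi)" .
  have "G R H1 H2 \<le> ennreal (16 * R * pi) / ennreal pi"
    unfolding G_def line_nn_integral_def by (rule divide_right_mono_ennreal[OF le])
  also have "\<dots> = ennreal (16 * R)" using R by (simp add: divide_ennreal)
  finally show "G R H1 H2 \<le> ennreal (16 * R)" .
qed simp


end
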